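(* Let $\beta>1$ and $\mathbf{L}\in Q^2(\mathbb{D}^2)$. An analytic function $F\colon\mathbb{D}^2\to\mathbb{C}$ has bounded $\mathbf{L}$-index in joint variables if and only if there exist $c\in(0,+\infty)$ and $N\in\mathbb{N}$ such that for each $z\in\mathbb{D}^2$ $$\sum_{0\le k_1+k_2\le N}\frac{|F^{(k_1,k_2)}(z)|}{k_1!k_2!\,l_1^{k_1}(z)l_2^{k_2}(z)}\ge c\sum_{k_1+k_2\ge N+1}\frac{|F^{(k_1,k_2)}(z)|}{k_1!k_2!\,l_1^{k_1}(z)l_2^{k_2}(z)}.$$
   Context: $\mathbb{D}^2=\{(z_1,z_2)\in\mathbb{C}^2:|z_1|<1,|z_2|<1\}$, $\mathbb{Z}_+=\{0,1,2,\dots\}$, $\mathbb{R}_+=[0,\infty)$. $\mathbf{L}(z)=(l_1(z),l_2(z))$, where each $l_j\colon\mathbb{D}^2\to\mathbb{R}_+$ is continuous and satisfies $l_j(z_1,z_2)>\beta/(1-|z_j|)$ for all $(z_1,z_2)\in\mathbb{D}^2$, $j=1,2$. For $z^0\in\mathbb{C}^2$ and $R=(r_1,r_2)\in\mathbb{R}_+^2$: $\mathbb{D}^2[z^0,R]=\{z:|z_j-z_j^0|\le r_j,\ j=1,2\}$ and $\frac{R}{\mathbf{L}(z^0)}=\big(\frac{r_1}{l_1(z^0)},\frac{r_2}{l_2(z^0)}\big)$. $F^{(p,q)}=\frac{\partial^{p+q}F}{\partial z_1^p\partial z_2^q}$. An analytic $F\colon\mathbb{D}^2\to\mathbb{C}$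 has bounded $\mathbf{L}$-index in joint variables if there is $n_0\in\mathbb{Z}_+$ such that for all $z\in\mathbb{D}^2$ and all $(p_1,p_2)\in\mathbb{Z}_+^2$: $\frac{|F^{(p_1,p_2)}(z)|}{p_1!p_2!\,l_1^{p_1}(z)l_2^{p_2}(z)}\le\max\{\frac{|F^{(k_1,k_2)}(z)|}{k_1!k_2!\,l_1^{k_1}(z)l_2^{k_2}(z)}:0\le k_1+k_2\le n_0\}$. $Q^2(\mathbb{D}^2)$ is the class of such $\mathbf{L}$ for which, for all $R=(r_1,r_2)\in[0,\beta]^2$ and $j=1,2$, $0<\lambda_{1,j}(R)\le\lambda_{2,j}(R)<\infty$, where $\lambda_{1,j}(R)=\inf_{z^0\in\mathbb{D}^2}\inf\{l_j(z)/l_j(z^0): z\in\mathbb{D}^2[z^0,R/\mathbf{L}(z^0)]\}$ and $\lambda_{2,j}(R)=\sup_{z^0\in\mathbb{D}^2}\sup\{l_j(z)/l_j(z^0): z\in\mathbb{D}^2[z^0,R/\mathbf{L}(z^0)]\}$. *)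

theory Defs
  imports "HOL-Analysis.Analysis"
begin

definition bidisc :: "(complex \<times> complex) set" where
  "bidisc = {z. cmod (fst z) < 1 \<and> cmod (snd z) < 1}"

definition polydisc :: "complex \<times> complex \<Rightarrow> real \<times> real \<Rightarrow> (complex \<times> complex) set" where
  "polydisc z0 R = {z. cmod (fst z - fst z0) \<le> fst R \<and> cmod (snd z - snd z0) \<le> snd R}"

text \<open>Analytic function on the bidisc: continuous and holomorphic in each variable
  separately (Osgood).\<close>
definition analytic_bidisc :: "(complex \<times> complex \<Rightarrow> complex) \<Rightarrow> bool" where
  "analytic_bidisc F \<longleftrightarrow> continuous_on bidisc F \<and>
     (\<forall>z\<in>bidisc. (\<lambda>w. F (w, snd z)) holomorphic_on ball 0 1 \<and>
                  (\<lambda>v. F (fst z, v)) holomorphic_on ball 0 1)"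

definition pderiv2 :: "(complex \<times> complex \<Rightarrow> complex) \<Rightarrow> nat \<Rightarrow> nat \<Rightarrow> complex \<times> complex \<Rightarrow> complex" where
  "pderiv2 F p q z = (deriv ^^ p) (\<lambda>w. (deriv ^^ q) (\<lambda>v. F (w, v)) (snd z)) (fst z)"

definition Lterm :: "(complex \<times> complex \<Rightarrow> real) \<Rightarrow> (complex \<times> complex \<Rightarrow> real) \<Rightarrow>
     (complex \<times> complex \<Rightarrow> complex) \<Rightarrow> nat \<times> nat \<Rightarrow> complex \<times> complex \<Rightarrow> real" where
  "Lterm l1 l2 F k z = cmod (pderiv2 F (fst k) (snd k) z) /
      (fact (fst k) * fact (snd k) * l1 z ^ fst k * l2 z ^ snd k)"

definition bounded_L_index_joint :: "(complex \<times> complex \<Rightarrow> real) \<Rightarrow> (complex \<times> complex \<Rightarrow> real) \<Rightarrow>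
     (complex \<times> complex \<Rightarrow> complex) \<Rightarrow> bool" where
  "bounded_L_index_joint l1 l2 F \<longleftrightarrow>
     (\<exists>n0::nat. \<forall>z\<in>bidisc. \<forall>p1 p2.
        Lterm l1 l2 F (p1, p2) z \<le> Max ((\<lambda>k. Lterm l1 l2 F k z) ` {k. fst k + snd k \<le> n0}))"

text \<open>lambda_{1,j}(R) and lambda_{2,j}(R), as extended reals; j = 1 uses l1, j = 2 uses l2.\<close>
definition lambda1 :: "(complex \<times> complex \<Rightarrow> real) \<Rightarrow> (complex \<times> complex \<Rightarrow> real) \<Rightarrow>
     (complex \<times> complex \<Rightarrow> real) \<Rightarrow> real \<times> real \<Rightarrow> ereal" where
  "lambda1 l1 l2 lj R = (INF z0\<in>bidisc. INF z\<in>bidisc \<inter> polydisc z0 (fst R / l1 z0, snd R / l2 z0).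
       ereal (lj z / lj z0))"

definition lambda2 :: "(complex \<times> complex \<Rightarrow> real) \<Rightarrow> (complex \<times> complex \<Rightarrow> real) \<Rightarrow>
     (complex \<times> complex \<Rightarrow> real) \<Rightarrow> real \<times> real \<Rightarrow> ereal" where
  "lambda2 l1 l2 lj R = (SUP z0\<in>bidisc. SUP z\<in>bidisc \<inter> polydisc z0 (fst R / l1 z0, snd R / l2 z0).
       ereal (lj z / lj z0))"

definition Q2 :: "real \<Rightarrow> (complex \<times> complex \<Rightarrow> real) \<Rightarrow> (complex \<times> complex \<Rightarrow> real) \<Rightarrow> bool" where
  "Q2 \<beta> l1 l2 \<longleftrightarrow>
     (\<forall>R. 0 \<le> fst R \<and> fst R \<le> \<beta> \<and> 0 \<le> snd R \<and> snd R \<le> \<beta> \<longrightarrow>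
       (\<forall>lj\<in>{l1, l2}. 0 < lambda1 l1 l2 lj R \<and> lambda1 l1 l2 lj R \<le> lambda2 l1 l2 lj R
                       \<and> lambda2 l1 l2 lj R < \<infinity>))"

end

theory Submission
  imports Defs "HOL-Complex_Analysis.Complex_Analysis"
begin


lemma contour_param_cont:
  fixes f :: "'a::topological_space \<Rightarrow> complex \<Rightarrow> complex"
  assumes f: "continuous_on (U \<times> path_image g) (\<lambda>(x,u). f x u)" and g: "path g"
    and vd: "continuous_on {0..1} (\<lambda>t. vector_derivative g (at t))"
  shows "continuous_on U (\<lambda>x. contour_integral g (f x))"
proof -
  have eq: "contour_integral g (f x) = integral (cbox 0 1) (\<lambda>t. f x (g t) * vector_derivative g (at t))" for x
    by (simp add: contour_integral_integral cbox_interval)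
  have c1: "continuous_on (U \<times> {0..1}) (\<lambda>(x,t). f x (g t))"
  proof -
    have "continuous_on (U \<times> {0..1}) (\<lambda>(x,t). (x, g t))"
    proof -
      have "continuous_on (U \<times> {0..1}) (\<lambda>p. g (snd p))"
        by (rule continuous_on_compose2[OF g[unfolded path_def] continuous_on_snd[OF continuous_on_id]]) auto
      then show ?thesis by (auto intro!: continuous_intros simp: split_beta)
    qed
    moreover have "(\<lambda>(x,t). (x, g t)) ` (U \<times> {0..1}) \<subseteq> U \<times> path_image g"
      by (auto simp: path_image_def)
    ultimately show ?thesis
      using continuous_on_compose2[OF f, of "U \<times> {0..1}" "\<lambda>(x,t). (x, g t)"] by (simp add: split_beta)
  qed
  have c2: "continuous_on (U \<times> {0..1}) (\<lambda>(x,t). vector_derivative g (at t))"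
    using continuous_on_compose2[OF vd continuous_on_snd[OF continuous_on_id], of "U \<times> {0..1}"] by (auto simp: split_beta)
  have "continuous_on (U \<times> cbox 0 1) (\<lambda>(x,t). f x (g t) * vector_derivative g (at t))"
    using continuous_on_mult[OF c1 c2] by (simp add: cbox_interval split_beta)
  from integral_continuous_on_param[OF this] show ?thesis by (simp add: eq)
qed

lemma circ_vd_cont: "continuous_on {0..1} (\<lambda>t. vector_derivative (circlepath c r) (at t))"
  by (simp add: vector_derivative_circlepath) (intro continuous_intros)

lemma line_vd_cont: "continuous_on {0..1} (\<lambda>t. vector_derivative (linepath a b) (at t))"
  by simp

lemma deriv_circle_formula:
  assumes V: "open V" and hol: "h holomorphic_on V" and sub: "cball v0 s \<subseteq> V" and v: "v \<in> ball v0 s"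
  shows "deriv h v = 1 / (2 * of_real pi * \<i>) * contour_integral (circlepath v0 s) (\<lambda>u. h u / (u - v)^2)"
proof -
  have "continuous_on (cball v0 s) h"
    using holomorphic_on_imp_continuous_on holomorphic_on_subset[OF hol sub] by blast
  moreover have "h holomorphic_on ball v0 s"
    using holomorphic_on_subset[OF hol] sub ball_subset_cball by blast
  ultimately show ?thesis
    using Cauchy_derivative_integral_circlepath(2)[OF _ _ v] DERIV_imp_deriv by blast
qed

lemma triangle_swap_zero:
  fixes f :: "complex \<Rightarrow> complex \<Rightarrow> complex"
  assumes cont: "continuous_on ((convex hull {a,b,c}) \<times> sphere v0 s) (\<lambda>(w,u). f w u)"
    and hol: "\<And>u. u \<in> sphere v0 s \<Longrightarrow> (\<lambda>w. f w u) holomorphic_on convex hull {a,b,c}"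
    and s: "0 \<le> s"
  shows "contour_integral (linepath a b) (\<lambda>w. contour_integral (circlepath v0 s) (f w)) +
         contour_integral (linepath b c) (\<lambda>w. contour_integral (circlepath v0 s) (f w)) +
         contour_integral (linepath c a) (\<lambda>w. contour_integral (circlepath v0 s) (f w)) = 0"
proof -
  let ?g = "circlepath v0 s"
  have segs: "closed_segment a b \<subseteq> convex hull {a,b,c}" "closed_segment b c \<subseteq> convex hull {a,b,c}"
    "closed_segment c a \<subseteq> convex hull {a,b,c}"
    using segments_subset_convex_hull[of a b c] segments_subset_convex_hull[of b c a] segments_subset_convex_hull[of c a b] by (auto simp: insert_commute)
  have swap: "contour_integral (linepath x y) (\<lambda>w. contour_integral ?g (f w)) =
      contour_integral ?g (\<lambda>u. contour_integral (linepath x y) (\<lambda>w. f w u))"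
    if xy: "closed_segment x y \<subseteq> convex hull {a,b,c}" for x y
  proof (rule contour_integral_swap)
    show "continuous_on (path_image (linepath x y) \<times> path_image ?g) (\<lambda>(y1, y2). f y1 y2)"
    proof (rule continuous_on_subset[OF cont])
      show "path_image (linepath x y) \<times> path_image ?g \<subseteq> (convex hull {a, b, c}) \<times> sphere v0 s"
      proof -
        have "path_image (linepath x y) \<subseteq> convex hull {a,b,c}" using xy by simp
        moreover have "path_image ?g = sphere v0 s" using s by simp
        ultimately show ?thesis by blast
      qed
    qed
  qed (auto simp: circ_vd_cont)
  have ci: "(\<lambda>u. contour_integral (linepath x y) (\<lambda>w. f w u)) contour_integrable_on ?g"
    if xy: "closed_segment x y \<subseteq> convex hull {a,b,c}" for x y
  proof (rule contour_integrable_continuous_circlepath)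
    have "continuous_on (sphere v0 s \<times> path_image (linepath x y)) (\<lambda>(u,w). f w u)"
    proof -
      have "continuous_on (sphere v0 s \<times> path_image (linepath x y)) ((\<lambda>(w,u). f w u) \<circ> (\<lambda>(u,w). (w,u)))"
        apply (rule continuous_on_compose)
         apply (auto intro!: continuous_intros simp: split_beta)[1]
        apply (rule continuous_on_subset[OF cont])
        using xy by auto
      then show ?thesis by (simp add: o_def split_beta)
    qed
    then show "continuous_on (path_image ?g) (\<lambda>u. contour_integral (linepath x y) (\<lambda>w. f w u))"
      using s by (intro contour_param_cont) (auto simp: line_vd_cont)
  qed
  have zero: "contour_integral (linepath a b) (\<lambda>w. f w u) + contour_integral (linepath b c) (\<lambda>w. f w u)
        + contour_integral (linepath c a) (\<lambda>w. f w u) = 0" if u: "u \<in> sphere v0 s" for u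
  proof -
    have i: "(\<lambda>w. f w u) contour_integrable_on linepath x y" if "closed_segment x y \<subseteq> convex hull {a,b,c}" for x y
      using that hol[OF u] by (meson contour_integrable_continuous_linepath continuous_on_subset holomorphic_on_imp_continuous_on)
    have "((\<lambda>w. f w u) has_contour_integral
        (contour_integral (linepath a b) (\<lambda>w. f w u) + (contour_integral (linepath b c) (\<lambda>w. f w u)
        + contour_integral (linepath c a) (\<lambda>w. f w u)))) (linepath a b +++ linepath b c +++ linepath c a)"
      using i segs
      by (intro has_contour_integral_join has_contour_integral_integral valid_path_join) auto
    moreover have "((\<lambda>w. f w u) has_contour_integral 0) (linepath a b +++ linepath b c +++ linepath c a)"
      using Cauchy_theorem_triangle hol[OF u] by blast
    ultimately show ?thesis using has_contour_integral_unique by (simp add: add.assoc)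
  qed
  have "contour_integral (linepath a b) (\<lambda>w. contour_integral ?g (f w)) +
         contour_integral (linepath b c) (\<lambda>w. contour_integral ?g (f w)) +
         contour_integral (linepath c a) (\<lambda>w. contour_integral ?g (f w)) =
        contour_integral ?g (\<lambda>u. contour_integral (linepath a b) (\<lambda>w. f w u) + contour_integral (linepath b c) (\<lambda>w. f w u)
        + contour_integral (linepath c a) (\<lambda>w. f w u))"
    using segs swap ci by (simp add: contour_integral_add contour_integrable_add)
  also have "\<dots> = contour_integral ?g (\<lambda>u. 0)"
    using s zero by (intro contour_integral_cong) auto
  finally show ?thesis by simp
qed

lemma deriv_param_local:
  fixes K :: "complex \<Rightarrow> complex \<Rightarrow> complex"
  assumes V: "open V"
    and cont: "continuous_on (U \<times> V) (\<lambda>(w,v). K w v)"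
    and hv: "\<And>w. w \<in> U \<Longrightarrow> K w holomorphic_on V"
    and v0: "v0 \<in> V"
  obtains s where "s > 0" "cball v0 s \<subseteq> V"
    "\<And>w v. w \<in> U \<Longrightarrow> v \<in> ball v0 s \<Longrightarrow> deriv (K w) v =
        1 / (2 * of_real pi * \<i>) * contour_integral (circlepath v0 s) (\<lambda>u. K w u / (u - v)^2)"
    "continuous_on (U \<times> ball v0 s) (\<lambda>p. contour_integral (circlepath v0 s) (\<lambda>u. K (fst p) u / (u - snd p)^2))"
proof -
  obtain s where s: "s > 0" "cball v0 s \<subseteq> V"
    using V v0 open_contains_cball by blast
  have f1: "\<And>w v. w \<in> U \<Longrightarrow> v \<in> ball v0 s \<Longrightarrow> deriv (K w) v =
        1 / (2 * of_real pi * \<i>) * contour_integral (circlepath v0 s) (\<lambda>u. K w u / (u - v)^2)"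
    using deriv_circle_formula[OF V hv s(2)] by blast
  have c1: "continuous_on ((U \<times> ball v0 s) \<times> sphere v0 s) (\<lambda>(p,u). K (fst p) u)"
  proof -
    have "continuous_on ((U \<times> ball v0 s) \<times> sphere v0 s) ((\<lambda>(w,v). K w v) \<circ> (\<lambda>(p,u). (fst p, u)))"
    proof (rule continuous_on_compose)
      show "continuous_on ((U \<times> ball v0 s) \<times> sphere v0 s) (\<lambda>(p, u). (fst p, u))"
        by (auto intro!: continuous_intros simp: split_beta)
      show "continuous_on ((\<lambda>(p, u). (fst p, u)) ` ((U \<times> ball v0 s) \<times> sphere v0 s)) (\<lambda>(w, v). K w v)"
        by (rule continuous_on_subset[OF cont]) (use s in auto)
    qed
    then show ?thesis by (simp add: o_def split_beta)
  qed
  have c2: "continuous_on ((U \<times> ball v0 s) \<times> sphere v0 s) (\<lambda>(p,u). K (fst p) u / (u - snd p)^2)"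
  proof -
    have "continuous_on ((U \<times> ball v0 s) \<times> sphere v0 s) (\<lambda>x. K (fst (fst x)) (snd x) / (snd x - snd (fst x))^2)"
    proof (rule continuous_on_divide)
      show "continuous_on ((U \<times> ball v0 s) \<times> sphere v0 s) (\<lambda>x. K (fst (fst x)) (snd x))"
        using c1 by (simp add: split_beta)
      show "\<forall>x\<in>(U \<times> ball v0 s) \<times> sphere v0 s. (snd x - snd (fst x))^2 \<noteq> 0"
        by auto
    qed (auto intro!: continuous_intros)
    then show ?thesis by (simp add: split_beta)
  qed
  have "continuous_on (U \<times> ball v0 s) (\<lambda>p. contour_integral (circlepath v0 s) (\<lambda>u. K (fst p) u / (u - snd p)^2))"
    using s c2 by (intro contour_param_cont) (auto simp: circ_vd_cont)
  with s f1 that show ?thesis by blast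
qed

lemma deriv_param_cont:
  fixes K :: "complex \<Rightarrow> complex \<Rightarrow> complex"
  assumes U: "open U" and V: "open V"
    and cont: "continuous_on (U \<times> V) (\<lambda>(w,v). K w v)"
    and hv: "\<And>w. w \<in> U \<Longrightarrow> K w holomorphic_on V"
  shows "continuous_on (U \<times> V) (\<lambda>(w,v). deriv (K w) v)"
proof -
  have "isCont (\<lambda>(w,v). deriv (K w) v) (w0, v0)" if "w0 \<in> U" "v0 \<in> V" for w0 v0
  proof -
    obtain s where s: "s > 0" "cball v0 s \<subseteq> V"
      and f1: "\<And>w v. w \<in> U \<Longrightarrow> v \<in> ball v0 s \<Longrightarrow> deriv (K w) v =
        1 / (2 * of_real pi * \<i>) * contour_integral (circlepath v0 s) (\<lambda>u. K w u / (u - v)^2)"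
      and c: "continuous_on (U \<times> ball v0 s) (\<lambda>p. contour_integral (circlepath v0 s) (\<lambda>u. K (fst p) u / (u - snd p)^2))"
      using deriv_param_local[OF V cont hv \<open>v0 \<in> V\<close>] by blast
    have "continuous_on (U \<times> ball v0 s) (\<lambda>p. 1 / (2 * of_real pi * \<i>) * contour_integral (circlepath v0 s) (\<lambda>u. K (fst p) u / (u - snd p)^2))"
      by (intro continuous_intros c)
    then have "continuous_on (U \<times> ball v0 s) (\<lambda>(w,v). deriv (K w) v)"
      by (rule continuous_on_eq) (auto simp: f1)
    moreover have "open (U \<times> ball v0 s)" using U by (simp add: open_Times)
    ultimately show ?thesis
      using continuous_on_eq_continuous_at that s by fastforce
  qed
  then show ?thesis
    by (intro continuous_at_imp_continuous_on) auto
qed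

lemma deriv_param_hol:
  fixes K :: "complex \<Rightarrow> complex \<Rightarrow> complex"
  assumes U: "open U" and V: "open V"
    and cont: "continuous_on (U \<times> V) (\<lambda>(w,v). K w v)"
    and hw: "\<And>v. v \<in> V \<Longrightarrow> (\<lambda>w. K w v) holomorphic_on U"
    and hv: "\<And>w. w \<in> U \<Longrightarrow> K w holomorphic_on V"
    and v0: "v0 \<in> V"
  shows "(\<lambda>w. deriv (K w) v0) holomorphic_on U"
proof -
  obtain s where s: "s > 0" "cball v0 s \<subseteq> V"
    and f1: "\<And>w v. w \<in> U \<Longrightarrow> v \<in> ball v0 s \<Longrightarrow> deriv (K w) v =
      1 / (2 * of_real pi * \<i>) * contour_integral (circlepath v0 s) (\<lambda>u. K w u / (u - v)^2)"
    and c: "continuous_on (U \<times> ball v0 s) (\<lambda>p. contour_integral (circlepath v0 s) (\<lambda>u. K (fst p) u / (u - snd p)^2))"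
    using deriv_param_local[OF V cont hv v0] by blast
  let ?P = "\<lambda>w. contour_integral (circlepath v0 s) (\<lambda>u. K w u / (u - v0)^2)"
  have cP: "continuous_on U ?P"
  proof -
    have "continuous_on U ((\<lambda>p. contour_integral (circlepath v0 s) (\<lambda>u. K (fst p) u / (u - snd p)^2)) \<circ> (\<lambda>w. (w, v0)))"
      by (rule continuous_on_compose) (auto intro!: continuous_intros continuous_on_subset[OF c] simp: s)
    then show ?thesis by (simp add: o_def)
  qed
  have "?P analytic_on U"
  proof (rule Morera_triangle[OF cP U], intro impI)
    fix a b c assume abc: "convex hull {a,b,c} \<subseteq> U"
    show "contour_integral (linepath a b) ?P + contour_integral (linepath b c) ?P + contour_integral (linepath c a) ?P = 0"
    proof (rule triangle_swap_zero)
      show "continuous_on ((convex hull {a,b,c}) \<times> sphere v0 s) (\<lambda>(w,u). K w u / (u - v0)^2)"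
      proof -
        have "continuous_on ((convex hull {a,b,c}) \<times> sphere v0 s) (\<lambda>x. K (fst x) (snd x) / (snd x - v0)^2)"
        proof (rule continuous_on_divide)
          show "continuous_on ((convex hull {a,b,c}) \<times> sphere v0 s) (\<lambda>x. K (fst x) (snd x))"
            using continuous_on_subset[OF cont, of "(convex hull {a,b,c}) \<times> sphere v0 s"] abc s
            by (force simp: split_beta)
          show "\<forall>x\<in>(convex hull {a,b,c}) \<times> sphere v0 s. (snd x - v0)^2 \<noteq> 0"
            using s by auto
        qed (auto intro!: continuous_intros)
        then show ?thesis by (simp add: split_beta)
      qed
      show "(\<lambda>w. K w u / (u - v0)^2) holomorphic_on convex hull {a,b,c}" if "u \<in> sphere v0 s" for u
        using that s abc by (intro holomorphic_intros holomorphic_on_subset[OF hw]) auto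
    qed (use s in auto)
  qed
  then have "?P holomorphic_on U" by (rule analytic_imp_holomorphic)
  then have "(\<lambda>w. 1 / (2 * of_real pi * \<i>) * ?P w) holomorphic_on U"
    by (intro holomorphic_intros)
  then show ?thesis
    by (rule holomorphic_transform) (use s f1 in auto)
qed

definition Gq :: "(complex \<times> complex \<Rightarrow> complex) \<Rightarrow> nat \<Rightarrow> complex \<Rightarrow> complex \<Rightarrow> complex" where
  "Gq F q w v = (deriv ^^ q) (\<lambda>v. F (w, v)) v"

lemma bidisc_eq: "bidisc = ball 0 1 \<times> ball 0 1"
  by (auto simp: bidisc_def)

lemma Gq_eta: "Gq F q w = (deriv ^^ q) (\<lambda>v. F (w, v))"
  by (simp add: Gq_def fun_eq_iff)

lemma Gq_Suc: "Gq F (Suc q) w = deriv (Gq F q w)"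
  by (simp add: Gq_eta)

lemma Gq_props:
  assumes F: "analytic_bidisc F"
  shows "continuous_on (ball 0 1 \<times> ball 0 1) (\<lambda>(w,v). Gq F q w v) \<and>
     (\<forall>v\<in>ball 0 1. (\<lambda>w. Gq F q w v) holomorphic_on ball 0 1) \<and>
     (\<forall>w\<in>ball 0 1. Gq F q w holomorphic_on ball 0 1)"
proof (induction q)
  case 0
  have c: "continuous_on (ball 0 1 \<times> ball 0 1) F" and
       h: "\<And>z. z \<in> bidisc \<Longrightarrow> (\<lambda>w. F (w, snd z)) holomorphic_on ball 0 1 \<and> (\<lambda>v. F (fst z, v)) holomorphic_on ball 0 1"
    using F by (auto simp: analytic_bidisc_def bidisc_eq)
  have "continuous_on (ball 0 1 \<times> ball 0 1) (\<lambda>(w,v). F (w,v))" using c by (simp add: split_beta)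
  moreover have "(\<lambda>w. F (w, v)) holomorphic_on ball 0 1" if "v \<in> ball 0 1" for v
    using h[of "(0,v)"] that by (auto simp: bidisc_def)
  moreover have "(\<lambda>v. F (w, v)) holomorphic_on ball 0 1" if "w \<in> ball 0 1" for w
    using h[of "(w,0)"] that by (auto simp: bidisc_def)
  ultimately show ?case by (simp add: Gq_def)
next
  case (Suc q)
  then have c: "continuous_on (ball 0 1 \<times> ball 0 1) (\<lambda>(w,v). Gq F q w v)"
    and hw: "\<And>v. v \<in> ball 0 1 \<Longrightarrow> (\<lambda>w. Gq F q w v) holomorphic_on ball 0 1"
    and hv: "\<And>w. w \<in> ball 0 1 \<Longrightarrow> Gq F q w holomorphic_on ball 0 1" by auto
  have "continuous_on (ball 0 1 \<times> ball 0 1) (\<lambda>(w,v). deriv (Gq F q w) v)"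
    by (rule deriv_param_cont[OF _ _ c hv]) auto
  moreover have "(\<lambda>w. deriv (Gq F q w) v) holomorphic_on ball 0 1" if "v \<in> ball 0 1" for v
    by (rule deriv_param_hol[OF _ _ c hw hv that]) auto
  moreover have "deriv (Gq F q w) holomorphic_on ball 0 1" if "w \<in> ball 0 1" for w
    using hv[OF that] by (intro holomorphic_deriv) auto
  ultimately show ?case by (simp add: Gq_Suc)
qed

lemma pderiv2_Gq: "pderiv2 F p q z = (deriv ^^ p) (\<lambda>w. Gq F q w (snd z)) (fst z)"
  by (simp add: pderiv2_def Gq_def)

lemma Gq_hol_w:
  assumes "analytic_bidisc F" "v \<in> ball 0 1"
  shows "(\<lambda>w. Gq F q w v) holomorphic_on ball 0 1"
  using Gq_props[OF assms(1), of q] assms(2) by blast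

lemma F_hol_v:
  assumes "analytic_bidisc F" "w \<in> ball 0 1"
  shows "(\<lambda>v. F (w, v)) holomorphic_on ball 0 1"
  using Gq_props[OF assms(1), of 0] assms(2) by (simp add: Gq_eta)

lemma cauchy2:
  assumes F: "analytic_bidisc F"
    and s1: "s1 > 0" "cball (fst z) s1 \<subseteq> ball 0 1"
    and s2: "s2 > 0" "cball (snd z) s2 \<subseteq> ball 0 1"
    and bnd: "\<And>w v. cmod (w - fst z) = s1 \<Longrightarrow> cmod (v - snd z) = s2 \<Longrightarrow> cmod (F (w,v)) \<le> M"
  shows "cmod (pderiv2 F p q z) \<le> fact p * fact q * M / (s1^p * s2^q)"
proof -
  have z2: "snd z \<in> ball 0 1" using s2 by (metis centre_in_cball less_imp_le subsetD)
  have inner: "cmod (Gq F q w (snd z)) \<le> fact q * M / s2^q" if w: "cmod (fst z - w) = s1" for w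
  proof -
    have wD: "w \<in> ball 0 1" using w s1 by (auto simp: dist_norm)
    have hol: "(\<lambda>v. F (w, v)) holomorphic_on ball 0 1" by (rule F_hol_v[OF F wD])
    show ?thesis unfolding Gq_def
    proof (rule Cauchy_inequality)
      show "(\<lambda>v. F (w, v)) holomorphic_on ball (snd z) s2"
        using hol s2 ball_subset_cball holomorphic_on_subset by blast
      show "continuous_on (cball (snd z) s2) (\<lambda>v. F (w, v))"
        using hol s2 holomorphic_on_imp_continuous_on holomorphic_on_subset by blast
      show "cmod ((\<lambda>v. F (w, v)) x) \<le> M" if "cmod (snd z - x) = s2" for x
        using bnd[of w x] w that by (simp add: norm_minus_commute)
    qed (use s2 in auto)
  qed
  have hol: "(\<lambda>w. Gq F q w (snd z)) holomorphic_on ball 0 1" by (rule Gq_hol_w[OF F z2])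
  have "cmod ((deriv ^^ p) (\<lambda>w. Gq F q w (snd z)) (fst z)) \<le> fact p * (fact q * M / s2^q) / s1^p"
  proof (rule Cauchy_inequality)
    show "(\<lambda>w. Gq F q w (snd z)) holomorphic_on ball (fst z) s1"
      using hol s1 ball_subset_cball holomorphic_on_subset by blast
    show "continuous_on (cball (fst z) s1) (\<lambda>w. Gq F q w (snd z))"
      using hol s1 holomorphic_on_imp_continuous_on holomorphic_on_subset by blast
  qed (use s1 inner in auto)
  then show ?thesis by (simp add: pderiv2_Gq field_simps)
qed

lemma sum_bound_geom:
  fixes f :: "nat \<Rightarrow> complex"
  assumes "f sums S" "\<And>n. norm (f n) \<le> c * d^n" "0 \<le> d" "d < 1"
  shows "norm S \<le> c / (1 - d)"
proof -
  have g: "(\<lambda>n. c * d^n) sums (c * (1 / (1 - d)))"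
    using assms by (intro sums_mult geometric_sums) auto
  have "norm (suminf f) \<le> (\<Sum>n. c * d^n)"
    using assms(2) g by (intro norm_suminf_le) (auto simp: sums_iff)
  then show ?thesis using assms(1) g by (simp add: sums_iff)
qed

lemma ball_sub_unit: "ball (a::complex) (1 - cmod a) \<subseteq> ball 0 1"
proof
  fix x assume "x \<in> ball a (1 - cmod a)"
  then have "cmod (x - a) < 1 - cmod a" by (simp add: dist_norm norm_minus_commute)
  moreover have "cmod x \<le> cmod a + cmod (x - a)" using norm_triangle_sub[of x a] by simp
  ultimately show "x \<in> ball 0 1" by simp
qed

lemma taylor2:
  assumes F: "analytic_bidisc F" and z: "z \<in> bidisc"
    and w1: "cmod (w1 - fst z) < 1 - cmod (fst z)" and w2: "cmod (w2 - snd z) < 1 - cmod (snd z)"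
    and d: "0 \<le> d" "d < 1"
    and bnd: "\<And>m n. cmod (pderiv2 F m n z) / (fact m * fact n) * cmod (w1 - fst z)^m * cmod (w2 - snd z)^n \<le> A * d^m * d^n"
  shows "cmod (F (w1, w2)) \<le> A / (1 - d) / (1 - d)"
proof -
  have zD: "fst z \<in> ball 0 1" "snd z \<in> ball 0 1" using z by (auto simp: bidisc_def)
  have b1: "ball (fst z) (1 - cmod (fst z)) \<subseteq> ball 0 1" by (rule ball_sub_unit)
  have b2: "ball (snd z) (1 - cmod (snd z)) \<subseteq> ball 0 1" by (rule ball_sub_unit)
  have w1D: "w1 \<in> ball 0 1" using w1 b1 by (auto simp: dist_norm norm_minus_commute)
  have outer: "(\<lambda>n. Gq F n w1 (snd z) / fact n * (w2 - snd z)^n) sums F (w1, w2)"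
  proof -
    have "(\<lambda>v. F (w1, v)) holomorphic_on ball (snd z) (1 - cmod (snd z))"
      using F_hol_v[OF F w1D] b2 holomorphic_on_subset by blast
    from holomorphic_power_series[OF this] w2 show ?thesis
      by (simp add: Gq_def dist_norm norm_minus_commute)
  qed
  have inner: "norm (Gq F n w1 (snd z) / fact n * (w2 - snd z)^n) \<le> (A / (1 - d)) * d^n" for n
  proof -
    have "(\<lambda>w. Gq F n w (snd z)) holomorphic_on ball (fst z) (1 - cmod (fst z))"
      using Gq_hol_w[OF F zD(2)] b1 holomorphic_on_subset by blast
    from holomorphic_power_series[OF this] w1
    have "(\<lambda>m. pderiv2 F m n z / fact m * (w1 - fst z)^m) sums Gq F n w1 (snd z)"
      by (simp add: pderiv2_Gq dist_norm norm_minus_commute)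
    then have "(\<lambda>m. pderiv2 F m n z / fact m * (w1 - fst z)^m * ((w2 - snd z)^n / fact n))
        sums (Gq F n w1 (snd z) * ((w2 - snd z)^n / fact n))"
      by (rule sums_mult2)
    moreover have "norm (pderiv2 F m n z / fact m * (w1 - fst z)^m * ((w2 - snd z)^n / fact n)) \<le> (A * d^n) * d^m" for m
      using bnd[of m n] by (simp add: norm_mult norm_divide norm_power field_simps)
    ultimately have "norm (Gq F n w1 (snd z) * ((w2 - snd z)^n / fact n)) \<le> (A * d^n) / (1 - d)"
      using sum_bound_geom d by blast
    then show ?thesis by (simp add: field_simps)
  qed
  show ?thesis using sum_bound_geom[OF outer inner d] by simp
qed




lemma ereal_pos_lower: assumes "0 < (A::ereal)" shows "\<exists>a>0. \<forall>x. A \<le> ereal x \<longrightarrow> a \<le> x"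
proof (cases A)
  case (real r) with assms show ?thesis by (intro exI[of _ r]) auto
next
  case PInf show ?thesis by (intro exI[of _ "1::real"]) (simp add: PInf)
next
  case MInf with assms show ?thesis by simp
qed

lemma ereal_fin_upper: "(B::ereal) < \<infinity> \<Longrightarrow> \<exists>b. \<forall>x. ereal x \<le> B \<longrightarrow> x \<le> b"
  by (cases B) auto

lemma lambda1_le:
  assumes "z0 \<in> bidisc" "z \<in> bidisc \<inter> polydisc z0 (fst R / la z0, snd R / lb z0)"
  shows "lambda1 la lb lj R \<le> ereal (lj z / lj z0)"
  unfolding lambda1_def using assms by (meson INF_lower2 INF_lower)

lemma lambda2_ge:
  assumes "z0 \<in> bidisc" "z \<in> bidisc \<inter> polydisc z0 (fst R / la z0, snd R / lb z0)"
  shows "ereal (lj z / lj z0) \<le> lambda2 la lb lj R"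
  unfolding lambda2_def using assms by (meson SUP_upper2 SUP_upper)

lemma Q2_bounds:
  assumes Q: "Q2 \<beta> l1 l2" and r: "0 \<le> r" "r \<le> \<beta>"
  obtains L1 L2 where "L1 > 0"
    "\<And>z0 z. z0 \<in> bidisc \<Longrightarrow> z \<in> bidisc \<Longrightarrow> z \<in> polydisc z0 (r / l1 z0, r / l2 z0) \<Longrightarrow>
       L1 \<le> l1 z / l1 z0 \<and> l1 z / l1 z0 \<le> L2 \<and> L1 \<le> l2 z / l2 z0 \<and> l2 z / l2 z0 \<le> L2"
proof -
  have q1: "0 < lambda1 l1 l2 l1 (r,r)" "lambda2 l1 l2 l1 (r,r) < \<infinity>"
   and q2: "0 < lambda1 l1 l2 l2 (r,r)" "lambda2 l1 l2 l2 (r,r) < \<infinity>"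
    using Q r unfolding Q2_def by (auto dest!: spec[of _ "(r,r)"])
  obtain a1 where a1: "a1 > 0" "\<forall>x. lambda1 l1 l2 l1 (r,r) \<le> ereal x \<longrightarrow> a1 \<le> x"
    using ereal_pos_lower[OF q1(1)] by blast
  obtain a2 where a2: "a2 > 0" "\<forall>x. lambda1 l1 l2 l2 (r,r) \<le> ereal x \<longrightarrow> a2 \<le> x"
    using ereal_pos_lower[OF q2(1)] by blast
  obtain b1 where b1: "\<forall>x. ereal x \<le> lambda2 l1 l2 l1 (r,r) \<longrightarrow> x \<le> b1"
    using ereal_fin_upper[OF q1(2)] by blast
  obtain b2 where b2: "\<forall>x. ereal x \<le> lambda2 l1 l2 l2 (r,r) \<longrightarrow> x \<le> b2"
    using ereal_fin_upper[OF q2(2)] by blast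
  show ?thesis
  proof (rule that[of "min a1 a2" "max b1 b2"])
    show "0 < min a1 a2" using a1 a2 by simp
    fix z0 z assume z: "z0 \<in> bidisc" "z \<in> bidisc" "z \<in> polydisc z0 (r / l1 z0, r / l2 z0)"
    then have zz: "z \<in> bidisc \<inter> polydisc z0 (fst (r,r) / l1 z0, snd (r,r) / l2 z0)" by simp
    show "min a1 a2 \<le> l1 z / l1 z0 \<and> l1 z / l1 z0 \<le> max b1 b2 \<and> min a1 a2 \<le> l2 z / l2 z0 \<and> l2 z / l2 z0 \<le> max b1 b2"
      using a1 a2 b1 b2 lambda1_le[where R="(r,r)" and la=l1 and lb=l2 and lj=l1, OF z(1) zz] lambda1_le[where R="(r,r)" and la=l1 and lb=l2 and lj=l2, OF z(1) zz]
        lambda2_ge[where R="(r,r)" and la=l1 and lb=l2 and lj=l1, OF z(1) zz] lambda2_ge[where R="(r,r)" and la=l1 and lb=l2 and lj=l2, OF z(1) zz]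
      by (smt (verit))
  qed
qed

lemma geo2:
  fixes x :: real
  assumes "0 \<le> x" "x < 1" "finite A"
  shows "(\<Sum>k\<in>A. x ^ (fst k + snd k)) \<le> 1 / (1 - x)^2"
proof -
  obtain n where "A \<subseteq> {..n} \<times> {..n}"
  proof -
    have "finite (fst ` A)" "finite (snd ` A)" using assms by auto
    then obtain n1 n2 where "\<forall>i\<in>fst ` A. i \<le> n1" "\<forall>i\<in>snd ` A. i \<le> n2"
      by (meson finite_nat_set_iff_bounded_le)
    then have "A \<subseteq> {..max n1 n2} \<times> {..max n1 n2}" by force
    then show ?thesis using that by blast
  qed
  then have "(\<Sum>k\<in>A. x ^ (fst k + snd k)) \<le> (\<Sum>k\<in>{..n} \<times> {..n}. x ^ (fst k + snd k))"
    using assms by (intro sum_mono2) auto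
  also have "\<dots> = (\<Sum>i\<le>n. x^i) * (\<Sum>j\<le>n. x^j)"
    by (simp add: sum_product sum.cartesian_product power_add case_prod_beta)
  also have "\<dots> \<le> (1 / (1 - x)) * (1 / (1 - x))"
  proof -
    have s: "(\<Sum>i\<le>n. x^i) \<le> 1 / (1 - x)"
    proof -
      have "(\<Sum>i\<le>n. x^i) \<le> (\<Sum>i. x^i)"
        using assms by (intro sum_le_suminf) auto
      then show ?thesis using suminf_geometric[of x] assms by simp
    qed
    have "0 \<le> (\<Sum>i\<le>n. x^i)" using assms by (intro sum_nonneg) auto
    then show ?thesis using s assms by (intro mult_mono) auto
  qed
  finally show ?thesis by (simp add: power2_eq_square)
qed




locale LQ =
  fixes \<beta> :: real and l1 l2 :: "complex \<times> complex \<Rightarrow> real" and F :: "complex \<times> complex \<Rightarrow> complex"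
  assumes beta: "\<beta> > 1"
    and L1: "\<forall>z\<in>bidisc. l1 z > \<beta> / (1 - cmod (fst z))"
    and L2: "\<forall>z\<in>bidisc. l2 z > \<beta> / (1 - cmod (snd z))"
    and Q: "Q2 \<beta> l1 l2" and F: "analytic_bidisc F"
begin

definition g :: "nat \<Rightarrow> complex \<times> complex \<Rightarrow> real" where
  "g N z = Max ((\<lambda>k. Lterm l1 l2 F k z) ` {k. fst k + snd k \<le> N})"

lemma zD: "z \<in> bidisc \<Longrightarrow> cmod (fst z) < 1 \<and> cmod (snd z) < 1"
  by (simp add: bidisc_def)

lemma lrad_aux:
  assumes "x < 1" "\<beta> / (1 - x) < l" "0 \<le> r" "r \<le> \<beta>"
  shows "0 < l" "r / l < 1 - x"
proof -
  have "0 < \<beta> / (1 - x)" using assms beta by simp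
  then show l: "0 < l" using assms by linarith
  have "\<beta> < l * (1 - x)" using assms(2) assms(1) by (simp add: divide_less_eq)
  then have "\<beta> / l < 1 - x" using l by (simp add: divide_less_eq mult.commute)
  moreover have "r / l \<le> \<beta> / l" using l assms by (simp add: divide_right_mono)
  ultimately show "r / l < 1 - x" by linarith
qed

lemma lpos: "z \<in> bidisc \<Longrightarrow> l1 z > 0 \<and> l2 z > 0"
  using lrad_aux(1)[of "cmod (fst z)" "l1 z" 0] lrad_aux(1)[of "cmod (snd z)" "l2 z" 0] L1 L2 zD beta by auto

lemma lrad: "z \<in> bidisc \<Longrightarrow> 0 \<le> r \<Longrightarrow> r \<le> \<beta> \<Longrightarrow> r / l1 z < 1 - cmod (fst z) \<and> r / l2 z < 1 - cmod (snd z)"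
  using lrad_aux(2)[of "cmod (fst z)" "l1 z" r] lrad_aux(2)[of "cmod (snd z)" "l2 z" r] L1 L2 zD by auto

lemma norm_le_add: "cmod (w::complex) \<le> cmod z + cmod (w - z)"
  using norm_triangle_sub[of w z] by simp

lemma poly_bidisc:
  assumes z: "z \<in> bidisc" and r: "0 \<le> r" "r \<le> \<beta>" and w: "w \<in> polydisc z (r / l1 z, r / l2 z)"
  shows "w \<in> bidisc"
proof -
  have "cmod (fst w - fst z) \<le> r / l1 z" "cmod (snd w - snd z) \<le> r / l2 z" using w by (auto simp: polydisc_def)
  then show ?thesis using lrad[OF z r] norm_le_add[of "fst w" "fst z"] norm_le_add[of "snd w" "snd z"]
    by (auto simp: bidisc_def)
qed

lemma cball_in:
  assumes z: "z \<in> bidisc" and r: "0 \<le> r" "r \<le> \<beta>"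
  shows "cball (fst z) (r / l1 z) \<subseteq> ball 0 1" "cball (snd z) (r / l2 z) \<subseteq> ball 0 1"
  using lrad[OF z r] norm_le_add[of _ "fst z"] norm_le_add[of _ "snd z"]
  by (auto simp: dist_norm norm_minus_commute intro: order.strict_trans1) (smt (verit))+

lemma Lterm_nonneg: "z \<in> bidisc \<Longrightarrow> 0 \<le> Lterm l1 l2 F k z"
  using lpos[of z] by (simp add: Lterm_def)

lemma fin_set: "finite {k::nat \<times> nat. fst k + snd k \<le> N}"
  by (rule finite_subset[of _ "{..N} \<times> {..N}"]) auto

lemma g_ge: "fst k + snd k \<le> N \<Longrightarrow> Lterm l1 l2 F k z \<le> g N z"
  unfolding g_def using fin_set by (intro Max_ge) auto

lemma g_le: "(\<And>k. fst k + snd k \<le> N \<Longrightarrow> Lterm l1 l2 F k z \<le> X) \<Longrightarrow> g N z \<le> X"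
  unfolding g_def using fin_set by (subst Max_le_iff) (auto intro!: exI[of _ 0])

lemma g_nonneg: "z \<in> bidisc \<Longrightarrow> 0 \<le> g N z"
  using g_ge[of "(0,0)" N z] Lterm_nonneg[of z "(0,0)"] by simp

lemma g_mono: "N \<le> M \<Longrightarrow> g N z \<le> g M z"
  by (rule g_le) (auto intro: g_ge)

lemma cauchy_L:
  assumes z: "z \<in> bidisc" and r: "0 < r" "r \<le> \<beta>"
    and M: "\<And>w. w \<in> polydisc z (r / l1 z, r / l2 z) \<Longrightarrow> cmod (F w) \<le> M"
  shows "Lterm l1 l2 F k z \<le> M / r ^ (fst k + snd k)"
proof -
  obtain p q where k: "k = (p,q)" by (cases k)
  have lp: "l1 z > 0" "l2 z > 0" using lpos[OF z] by auto
  have c: "cmod (pderiv2 F p q z) \<le> fact p * fact q * M / ((r / l1 z)^p * (r / l2 z)^q)"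
  proof (rule cauchy2[OF F])
    show "cball (fst z) (r / l1 z) \<subseteq> ball 0 1" "cball (snd z) (r / l2 z) \<subseteq> ball 0 1"
      using cball_in[OF z] r by auto
    show "cmod (F (w, v)) \<le> M" if "cmod (w - fst z) = r / l1 z" "cmod (v - snd z) = r / l2 z" for w v
      using that by (intro M) (auto simp: polydisc_def)
  qed (use r lp in auto)
  have D: "0 < fact p * fact q * l1 z ^ p * l2 z ^ q" using lp by simp
  have "Lterm l1 l2 F k z = cmod (pderiv2 F p q z) / (fact p * fact q * l1 z ^ p * l2 z ^ q)"
    by (simp add: Lterm_def k)
  also have "\<dots> \<le> (fact p * fact q * M / ((r / l1 z)^p * (r / l2 z)^q)) / (fact p * fact q * l1 z ^ p * l2 z ^ q)"
    using c D by (intro divide_right_mono) auto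
  also have "\<dots> = M / r ^ (fst k + snd k)"
    using lp r by (simp add: k power_add power_divide field_simps)
  finally show ?thesis .
qed

lemma taylor_L:
  assumes z: "z \<in> bidisc" and d: "0 \<le> d" "d < 1"
    and A: "\<And>k. Lterm l1 l2 F k z \<le> A"
    and w: "w \<in> polydisc z (d / l1 z, d / l2 z)"
  shows "cmod (F w) \<le> A / (1 - d) / (1 - d)"
proof -
  have lp: "l1 z > 0" "l2 z > 0" using lpos[OF z] by auto
  have dw: "cmod (fst w - fst z) \<le> d / l1 z" "cmod (snd w - snd z) \<le> d / l2 z"
    using w by (auto simp: polydisc_def)
  have dl: "d / l1 z < 1 - cmod (fst z)" "d / l2 z < 1 - cmod (snd z)" using lrad[OF z, of d] d beta by auto
  have e1: "l1 z * cmod (fst w - fst z) \<le> d" using dw lp by (simp add: field_simps)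
  have e2: "l2 z * cmod (snd w - snd z) \<le> d" using dw lp by (simp add: field_simps)
  have "cmod (F (fst w, snd w)) \<le> A / (1 - d) / (1 - d)"
  proof (rule taylor2[OF F z _ _ d])
    show "cmod (fst w - fst z) < 1 - cmod (fst z)" "cmod (snd w - snd z) < 1 - cmod (snd z)"
      using dw dl by linarith+
    fix m n
    have eq: "cmod (pderiv2 F m n z) / (fact m * fact n) * cmod (fst w - fst z) ^ m * cmod (snd w - snd z) ^ n
        = Lterm l1 l2 F (m,n) z * ((l1 z * cmod (fst w - fst z)) ^ m * (l2 z * cmod (snd w - snd z)) ^ n)"
      using lp by (simp add: Lterm_def power_mult_distrib field_simps)
    have hp: "(l1 z * cmod (fst w - fst z)) ^ m * (l2 z * cmod (snd w - snd z)) ^ n \<le> d^m * d^n"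
      using e1 e2 lp d by (intro mult_mono power_mono) auto
    have n1: "0 \<le> Lterm l1 l2 F (m,n) z" by (rule Lterm_nonneg[OF z])
    have n2: "0 \<le> (l1 z * cmod (fst w - fst z)) ^ m * (l2 z * cmod (snd w - snd z)) ^ n" using lp by simp
    have "Lterm l1 l2 F (m,n) z * ((l1 z * cmod (fst w - fst z)) ^ m * (l2 z * cmod (snd w - snd z)) ^ n)
        \<le> A * (d^m * d^n)"
      by (rule mult_mono[OF A hp]) (use n1 n2 A[of "(m,n)"] in auto)
    then show "cmod (pderiv2 F m n z) / (fact m * fact n) * cmod (fst w - fst z) ^ m * cmod (snd w - snd z) ^ n
        \<le> A * d ^ m * d ^ n" by (subst eq) (simp add: mult.assoc)
  qed
  then show ?thesis by simp
qed

lemma self_poly: "0 \<le> a \<Longrightarrow> 0 \<le> b \<Longrightarrow> z \<in> polydisc z (a, b)"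
  by (simp add: polydisc_def)

lemma main:
  assumes C: "C \<ge> 1" and W: "\<And>z k. z \<in> bidisc \<Longrightarrow> Lterm l1 l2 F k z \<le> C * g N z"
  shows "\<exists>K \<ge> 0. \<forall>z\<in>bidisc. \<forall>k. Lterm l1 l2 F k z \<le> K * g N z / \<beta> ^ (fst k + snd k)"
proof -
  have r12: "0 \<le> (1/2::real)" "1/2 \<le> \<beta>" and rb: "0 \<le> \<beta>" "\<beta> \<le> \<beta>" using beta by auto
  obtain L1 L1' where L1: "L1 > 0" and hL1: "\<And>z0 z. z0 \<in> bidisc \<Longrightarrow> z \<in> bidisc \<Longrightarrow>
      z \<in> polydisc z0 ((1/2) / l1 z0, (1/2) / l2 z0) \<Longrightarrow>
       L1 \<le> l1 z / l1 z0 \<and> l1 z / l1 z0 \<le> L1' \<and> L1 \<le> l2 z / l2 z0 \<and> l2 z / l2 z0 \<le> L1'"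
    by (rule Q2_bounds[OF Q r12]) (rule that)
  obtain L2' L2 where "L2' > 0" and hL2: "\<And>z0 z. z0 \<in> bidisc \<Longrightarrow> z \<in> bidisc \<Longrightarrow>
      z \<in> polydisc z0 (\<beta> / l1 z0, \<beta> / l2 z0) \<Longrightarrow>
       L2' \<le> l1 z / l1 z0 \<and> l1 z / l1 z0 \<le> L2 \<and> L2' \<le> l2 z / l2 z0 \<and> l2 z / l2 z0 \<le> L2"
    by (rule Q2_bounds[OF Q rb]) (rule that)
  have b0: "(0::complex, 0::complex) \<in> bidisc" by (simp add: bidisc_def)
  have lp0: "l1 (0,0) > 0" "l2 (0,0) > 0" using lpos[OF b0] by auto
  have L1le: "L1 \<le> 1"
    using hL1[OF b0 b0 self_poly] lp0 by simp
  have L2ge: "1 \<le> L2"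
    using hL2[OF b0 b0 self_poly] lp0 beta by simp
  define \<rho> where "\<rho> = L1 / 4"
  define K0 where "K0 = 4 * (C * (1 / \<rho>) ^ N)"
  have \<rho>: "0 < \<rho>" "\<rho> \<le> 1/4" using L1 L1le by (auto simp: \<rho>_def)
  have K0: "0 \<le> K0" using \<rho> C by (simp add: K0_def)
  have step: "w \<in> bidisc \<and> (\<forall>u \<in> polydisc w (\<rho> / l1 w, \<rho> / l2 w). cmod (F u) \<le> K0 * M)"
    if z: "z \<in> bidisc" and M: "\<And>u. u \<in> polydisc z (\<rho> / l1 z, \<rho> / l2 z) \<Longrightarrow> cmod (F u) \<le> M"
      and w: "w \<in> polydisc z ((1/4) / l1 z, (1/4) / l2 z)" for z w M
  proof -
    have lz: "l1 z > 0" "l2 z > 0" using lpos[OF z] by auto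
    have "z \<in> polydisc z (\<rho> / l1 z, \<rho> / l2 z)" by (rule self_poly) (use lz \<rho> in auto)
    then have "cmod (F z) \<le> M" by (rule M)
    then have M0: "0 \<le> M" by (rule order_trans[OF norm_ge_zero])
    have "Lterm l1 l2 F k z \<le> M * (1/\<rho>)^N" if k: "fst k + snd k \<le> N" for k
    proof -
      have "Lterm l1 l2 F k z \<le> M / \<rho> ^ (fst k + snd k)"
        using \<rho> beta by (intro cauchy_L[OF z _ _ M]) auto
      also have "\<dots> = M * (1/\<rho>) ^ (fst k + snd k)" by (simp add: power_one_over)
      also have "\<dots> \<le> M * (1/\<rho>) ^ N"
        using \<rho> M0 k by (intro mult_left_mono power_increasing) auto
      finally show ?thesis .
    qed
    then have "g N z \<le> M * (1/\<rho>)^N" by (intro g_le)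
    then have "C * g N z \<le> C * (M * (1/\<rho>)^N)" using C by (intro mult_left_mono) auto
    then have A: "Lterm l1 l2 F k z \<le> C * (M * (1/\<rho>)^N)" for k
      using W[OF z, of k] by (rule order_trans[rotated])
    have wb: "w \<in> bidisc" using poly_bidisc[OF z _ _ w] beta by auto
    have w2: "w \<in> polydisc z ((1/2) / l1 z, (1/2) / l2 z)"
    proof -
      have "(1/4) / l1 z \<le> (1/2) / l1 z" by (rule divide_right_mono) (use lz in auto)
      moreover have "(1/4) / l2 z \<le> (1/2) / l2 z" by (rule divide_right_mono) (use lz in auto)
      ultimately show ?thesis using w by (auto simp: polydisc_def)
    qed
    have rl: "L1 \<le> l1 w / l1 z" "L1 \<le> l2 w / l2 z" using hL1[OF z wb w2] by auto
    have rr: "\<rho> / lw \<le> (1/4) / lz" if "L1 \<le> lw / lz" "lz > 0" for lw lz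
    proof -
      have le: "L1 * lz \<le> lw" using that by (simp add: field_simps)
      have p1: "0 < L1 * lz" using L1 that by simp
      then have "0 < lw" using le by linarith
      then have p2: "0 < lw * (L1 * lz)" using p1 by simp
      have "\<rho> / lw \<le> \<rho> / (L1 * lz)"
        using le p2 \<rho> by (intro divide_left_mono) auto
      also have "\<dots> = (1/4) / lz" using L1 that by (simp add: \<rho>_def)
      finally show ?thesis .
    qed
    have r1: "\<rho> / l1 w \<le> (1/4) / l1 z" by (rule rr[OF rl(1) lz(1)])
    have r2: "\<rho> / l2 w \<le> (1/4) / l2 z" by (rule rr[OF rl(2) lz(2)])
    have "cmod (F u) \<le> K0 * M" if u: "u \<in> polydisc w (\<rho> / l1 w, \<rho> / l2 w)" for u
    proof -
      have "u \<in> polydisc z ((1/2) / l1 z, (1/2) / l2 z)"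
      proof -
        have "cmod (fst u - fst z) \<le> cmod (fst u - fst w) + cmod (fst w - fst z)"
          using norm_triangle_ineq[of "fst u - fst w" "fst w - fst z"] by simp
        moreover have "cmod (snd u - snd z) \<le> cmod (snd u - snd w) + cmod (snd w - snd z)"
          using norm_triangle_ineq[of "snd u - snd w" "snd w - snd z"] by simp
        ultimately show ?thesis using u w r1 r2 by (auto simp: polydisc_def)
      qed
      then have "cmod (F u) \<le> C * (M * (1/\<rho>)^N) / (1 - 1/2) / (1 - 1/2)"
        by (intro taylor_L[OF z _ _ A]) auto
      then show ?thesis by (simp add: K0_def mult_ac)
    qed
    with wb show ?thesis by blast
  qed
  obtain n :: nat where n: "4 * \<beta> * L2 \<le> real n" "0 < n"
  proof -
    have "4 * \<beta> * L2 \<le> real (nat \<lceil>4 * \<beta> * L2\<rceil> + 1)" by linarith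
    then show ?thesis using that by fastforce
  qed
  have chain: "cmod (F w) \<le> K0 ^ n * M"
    if z: "z \<in> bidisc" and M: "\<And>u. u \<in> polydisc z (\<rho> / l1 z, \<rho> / l2 z) \<Longrightarrow> cmod (F u) \<le> M"
      and w: "w \<in> polydisc z (\<beta> / l1 z, \<beta> / l2 z)" for z w M
  proof -
    have lz: "l1 z > 0" "l2 z > 0" using lpos[OF z] by auto
    define p where "p i = (fst z + (of_nat i / of_nat n) * (fst w - fst z), snd z + (of_nat i / of_nat n) * (snd w - snd z))" for i
    have dw: "cmod (fst w - fst z) \<le> \<beta> / l1 z" "cmod (snd w - snd z) \<le> \<beta> / l2 z"
      using w by (auto simp: polydisc_def)
    have pz: "p i \<in> polydisc z (\<beta> / l1 z, \<beta> / l2 z)" if "i \<le> n" for i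
    proof -
      have f: "real i / real n \<le> 1" using that n by simp
      have "cmod (fst (p i) - fst z) = (real i / real n) * cmod (fst w - fst z)"
        by (simp add: p_def norm_mult norm_divide)
      also have "\<dots> \<le> cmod (fst w - fst z)" using f by (intro mult_left_le_one_le) auto
      also have "\<dots> \<le> \<beta> / l1 z" by (rule dw(1))
      finally have 1: "cmod (fst (p i) - fst z) \<le> \<beta> / l1 z" .
      have "cmod (snd (p i) - snd z) = (real i / real n) * cmod (snd w - snd z)"
        by (simp add: p_def norm_mult norm_divide)
      also have "\<dots> \<le> cmod (snd w - snd z)" using f by (intro mult_left_le_one_le) auto
      also have "\<dots> \<le> \<beta> / l2 z" by (rule dw(2))
      finally have 2: "cmod (snd (p i) - snd z) \<le> \<beta> / l2 z" .
      show ?thesis using 1 2 by (simp add: polydisc_def)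
    qed
    have "p i \<in> bidisc \<and> (\<forall>u\<in>polydisc (p i) (\<rho> / l1 (p i), \<rho> / l2 (p i)). cmod (F u) \<le> K0 ^ i * M)"
      if "i \<le> n" for i
      using that
    proof (induction i)
      case 0
      have "p 0 = z" by (simp add: p_def)
      then show ?case using z M by simp
    next
      case (Suc i)
      then have IH: "p i \<in> bidisc" "\<And>u. u \<in> polydisc (p i) (\<rho> / l1 (p i), \<rho> / l2 (p i)) \<Longrightarrow> cmod (F u) \<le> K0 ^ i * M"
        by auto
      have lpi: "l1 (p i) > 0" "l2 (p i) > 0" using lpos[OF IH(1)] by auto
      have rat: "l1 (p i) / l1 z \<le> L2" "l2 (p i) / l2 z \<le> L2"
        using hL2[OF z IH(1) pz] Suc.prems by auto
      have d1: "fst (p (Suc i)) - fst (p i) = (fst w - fst z) / of_nat n"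
        using n by (simp add: p_def field_simps)
      have d2: "snd (p (Suc i)) - snd (p i) = (snd w - snd z) / of_nat n"
        using n by (simp add: p_def field_simps)
      have key: "x / real n \<le> (1/4) / l" if "x \<le> \<beta> / lz" "lz > 0" "l > 0" "l / lz \<le> L2" for x lz l
      proof -
        have "l \<le> L2 * lz" using that by (simp add: field_simps)
        have "x / real n \<le> (\<beta> / lz) / real n" by (rule divide_right_mono) (use that n in auto)
        also have "\<dots> \<le> (1/4) / l"
        proof -
          have "\<beta> * l \<le> \<beta> * (L2 * lz)" using \<open>l \<le> L2 * lz\<close> beta by simp
          also have "\<dots> = (\<beta> * L2) * lz" by (simp add: mult.assoc)
          also have "\<dots> \<le> real n / 4 * lz" using n that by (intro mult_right_mono) auto
          finally have "\<beta> * l \<le> real n / 4 * lz" .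
          then show ?thesis using that n by (simp add: field_simps)
        qed
        finally show ?thesis .
      qed
      have "p (Suc i) \<in> polydisc (p i) ((1/4) / l1 (p i), (1/4) / l2 (p i))"
        using key[OF dw(1) lz(1) lpi(1) rat(1)] key[OF dw(2) lz(2) lpi(2) rat(2)] n
        by (simp add: polydisc_def d1 d2 norm_divide)
      from step[OF IH(1) IH(2) this] show ?case by (simp add: mult.assoc mult.left_commute)
    qed
    from this[of n] have "\<forall>u\<in>polydisc (p n) (\<rho> / l1 (p n), \<rho> / l2 (p n)). cmod (F u) \<le> K0 ^ n * M"
      by simp
    moreover have "p n = w" using n by (simp add: p_def)
    moreover have "w \<in> bidisc" using poly_bidisc[OF z _ _ w] beta by auto
    ultimately have "\<forall>u\<in>polydisc w (\<rho> / l1 w, \<rho> / l2 w). cmod (F u) \<le> K0 ^ n * M" "w \<in> bidisc" by auto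
    moreover have "w \<in> polydisc w (\<rho> / l1 w, \<rho> / l2 w)" using lpos[OF \<open>w \<in> bidisc\<close>] \<rho> by (intro self_poly) auto
    ultimately show ?thesis by blast
  qed
  show ?thesis
  proof (intro exI[of _ "K0 ^ n * (C * 4)"] conjI ballI allI)
    show "0 \<le> K0 ^ n * (C * 4)" using K0 C by simp
    fix z k assume z: "z \<in> bidisc"
    have lz: "l1 z > 0" "l2 z > 0" using lpos[OF z] by auto
    have T: "cmod (F u) \<le> C * g N z * 4" if u: "u \<in> polydisc z (\<rho> / l1 z, \<rho> / l2 z)" for u
    proof -
      have "u \<in> polydisc z ((1/2) / l1 z, (1/2) / l2 z)"
      proof -
        have "\<rho> / l1 z \<le> (1/2) / l1 z" by (rule divide_right_mono) (use \<rho> lz in auto)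
        moreover have "\<rho> / l2 z \<le> (1/2) / l2 z" by (rule divide_right_mono) (use \<rho> lz in auto)
        ultimately show ?thesis using u by (auto simp: polydisc_def)
      qed
      then have "cmod (F u) \<le> C * g N z / (1 - 1/2) / (1 - 1/2)"
        by (intro taylor_L[OF z _ _ W[OF z]]) auto
      then show ?thesis by simp
    qed
    have "Lterm l1 l2 F k z \<le> K0 ^ n * (C * g N z * 4) / \<beta> ^ (fst k + snd k)"
      using beta by (intro cauchy_L[OF z] chain[OF z T]) auto
    then show "Lterm l1 l2 F k z \<le> K0 ^ n * (C * 4) * g N z / \<beta> ^ (fst k + snd k)"
      by (simp add: mult_ac)
  qed
qed

end




context LQ begin

lemma tail_bound:
  assumes K: "K \<ge> 0" and B: "\<And>k. Lterm l1 l2 F k z \<le> K * g N z / \<beta> ^ (fst k + snd k)"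
    and z: "z \<in> bidisc"
  shows "(\<lambda>k. Lterm l1 l2 F k z) summable_on A"
    and "(\<Sum>\<^sub>\<infinity>k\<in>A. Lterm l1 l2 F k z) \<le> K * g N z * (1 / (1 - 1/\<beta>)^2)"
proof -
  have x: "0 \<le> 1/\<beta>" "1/\<beta> < 1" using beta by auto
  have gk: "0 \<le> K * g N z" using K g_nonneg[OF z] by simp
  have fs: "sum (\<lambda>k. Lterm l1 l2 F k z) S \<le> K * g N z * (1 / (1 - 1/\<beta>)^2)" if "finite S" for S
  proof -
    have "sum (\<lambda>k. Lterm l1 l2 F k z) S \<le> sum (\<lambda>k. K * g N z * (1/\<beta>) ^ (fst k + snd k)) S"
      using B by (intro sum_mono) (simp add: power_one_over)
    also have "\<dots> = K * g N z * (\<Sum>k\<in>S. (1/\<beta>) ^ (fst k + snd k))" by (simp add: sum_distrib_left)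
    also have "\<dots> \<le> K * g N z * (1 / (1 - 1/\<beta>)^2)"
      using geo2[OF x that] gk by (intro mult_left_mono) auto
    finally show ?thesis .
  qed
  show s: "(\<lambda>k. Lterm l1 l2 F k z) summable_on A"
  proof (rule nonneg_bdd_above_summable_on)
    show "0 \<le> Lterm l1 l2 F k z" for k using Lterm_nonneg[OF z] .
    show "bdd_above (sum (\<lambda>k. Lterm l1 l2 F k z) ` {S. S \<subseteq> A \<and> finite S})"
      using fs by (intro bdd_aboveI[of _ "K * g N z * (1 / (1 - 1/\<beta>)^2)"]) auto
  qed
  show "(\<Sum>\<^sub>\<infinity>k\<in>A. Lterm l1 l2 F k z) \<le> K * g N z * (1 / (1 - 1/\<beta>)^2)"
    using s fs by (rule infsum_le_finite_sums)
qed

lemma g_attained: "\<exists>k. fst k + snd k \<le> N \<and> Lterm l1 l2 F k z = g N z"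
proof -
  have "g N z \<in> (\<lambda>k. Lterm l1 l2 F k z) ` {k. fst k + snd k \<le> N}"
    unfolding g_def using fin_set by (intro Max_in) (auto intro!: exI[of _ 0])
  then show ?thesis by (metis (no_types, lifting) image_iff mem_Collect_eq)
qed

lemma S_ge_g: "z \<in> bidisc \<Longrightarrow> g N z \<le> (\<Sum>k\<in>{k. fst k + snd k \<le> N}. Lterm l1 l2 F k z)"
  using g_attained[of N z] fin_set Lterm_nonneg
  by (metis (no_types, lifting) mem_Collect_eq member_le_sum)

lemma forward:
  assumes "bounded_L_index_joint l1 l2 F"
  shows "\<exists>c>0. \<exists>N::nat. \<forall>z\<in>bidisc.
       (\<lambda>k. Lterm l1 l2 F k z) summable_on {k. fst k + snd k \<ge> N + 1} \<and>
       (\<Sum>k\<in>{k. fst k + snd k \<le> N}. Lterm l1 l2 F k z)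
         \<ge> c * (\<Sum>\<^sub>\<infinity>k\<in>{k. fst k + snd k \<ge> N + 1}. Lterm l1 l2 F k z)"
proof -
  obtain n0 where n0: "\<And>z p1 p2. z \<in> bidisc \<Longrightarrow> Lterm l1 l2 F (p1, p2) z \<le> g n0 z"
    using assms unfolding bounded_L_index_joint_def g_def by blast
  have W: "Lterm l1 l2 F k z \<le> 1 * g n0 z" if "z \<in> bidisc" for z k
    using n0[OF that, of "fst k" "snd k"] by simp
  obtain K where K: "K \<ge> 0" and B: "\<And>z k. z \<in> bidisc \<Longrightarrow> Lterm l1 l2 F k z \<le> K * g n0 z / \<beta> ^ (fst k + snd k)"
    using main[of 1 n0] W by auto
  define Q where "Q = K * (1 / (1 - 1/\<beta>)^2)"
  have Q: "0 \<le> Q" using K by (simp add: Q_def)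
  define c where "c = 1 / (Q + 1)"
  have c: "c > 0" using Q by (simp add: c_def)
  show ?thesis
  proof (intro exI[of _ c] conjI exI[of _ n0] ballI c)
    fix z assume z: "z \<in> bidisc"
    show "(\<lambda>k. Lterm l1 l2 F k z) summable_on {k. fst k + snd k \<ge> n0 + 1}"
      by (rule tail_bound(1)[OF K B[OF z] z])
    have T: "(\<Sum>\<^sub>\<infinity>k\<in>{k. fst k + snd k \<ge> n0 + 1}. Lterm l1 l2 F k z) \<le> Q * g n0 z"
      using tail_bound(2)[OF K B[OF z] z] by (simp add: Q_def mult_ac)
    have "c * (\<Sum>\<^sub>\<infinity>k\<in>{k. fst k + snd k \<ge> n0 + 1}. Lterm l1 l2 F k z) \<le> c * (Q * g n0 z)"
      using T c by (intro mult_left_mono) auto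
    also have "\<dots> \<le> g n0 z"
    proof -
      have "c * Q \<le> 1" using Q by (simp add: c_def)
      then have "(c * Q) * g n0 z \<le> 1 * g n0 z" using g_nonneg[OF z] by (intro mult_right_mono) auto
      then show ?thesis by (simp add: mult_ac)
    qed
    also have "\<dots> \<le> (\<Sum>k\<in>{k. fst k + snd k \<le> n0}. Lterm l1 l2 F k z)" by (rule S_ge_g[OF z])
    finally show "c * (\<Sum>\<^sub>\<infinity>k\<in>{k. fst k + snd k \<ge> n0 + 1}. Lterm l1 l2 F k z)
        \<le> (\<Sum>k\<in>{k. fst k + snd k \<le> n0}. Lterm l1 l2 F k z)" .
  qed
qed

lemma backward:
  assumes "\<exists>c>0. \<exists>N::nat. \<forall>z\<in>bidisc.
       (\<lambda>k. Lterm l1 l2 F k z) summable_on {k. fst k + snd k \<ge> N + 1} \<and>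
       (\<Sum>k\<in>{k. fst k + snd k \<le> N}. Lterm l1 l2 F k z)
         \<ge> c * (\<Sum>\<^sub>\<infinity>k\<in>{k. fst k + snd k \<ge> N + 1}. Lterm l1 l2 F k z)"
  shows "bounded_L_index_joint l1 l2 F"
proof -
  obtain c N where c: "c > 0" and H: "\<And>z. z \<in> bidisc \<Longrightarrow>
       (\<lambda>k. Lterm l1 l2 F k z) summable_on {k. fst k + snd k \<ge> N + 1} \<and>
       (\<Sum>k\<in>{k. fst k + snd k \<le> N}. Lterm l1 l2 F k z)
         \<ge> c * (\<Sum>\<^sub>\<infinity>k\<in>{k. fst k + snd k \<ge> N + 1}. Lterm l1 l2 F k z)"
    using assms by blast
  define m where "m = real (card {k::nat \<times> nat. fst k + snd k \<le> N})"
  define C where "C = max 1 (m / c)"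
  have C: "C \<ge> 1" by (simp add: C_def)
  have W: "Lterm l1 l2 F k z \<le> C * g N z" if z: "z \<in> bidisc" for z k
  proof (cases "fst k + snd k \<le> N")
    case True
    then have "Lterm l1 l2 F k z \<le> 1 * g N z" using g_ge by simp
    also have "\<dots> \<le> C * g N z" using C g_nonneg[OF z] by (intro mult_right_mono) auto
    finally show ?thesis .
  next
    case False
    have sm: "(\<lambda>k. Lterm l1 l2 F k z) summable_on {k. fst k + snd k \<ge> N + 1}" using H[OF z] by blast
    have "Lterm l1 l2 F k z = sum (\<lambda>k. Lterm l1 l2 F k z) {k}" by simp
    also have "\<dots> \<le> (\<Sum>\<^sub>\<infinity>k\<in>{k. fst k + snd k \<ge> N + 1}. Lterm l1 l2 F k z)"
      using False Lterm_nonneg[OF z] by (intro finite_sum_le_infsum[OF sm]) auto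
    finally have a1: "Lterm l1 l2 F k z \<le> (\<Sum>\<^sub>\<infinity>k\<in>{k. fst k + snd k \<ge> N + 1}. Lterm l1 l2 F k z)" .
    have "(\<Sum>k\<in>{k. fst k + snd k \<le> N}. Lterm l1 l2 F k z) \<le> m * g N z"
      unfolding m_def by (rule sum_bounded_above) (auto intro: g_ge)
    with H[OF z] have "c * (\<Sum>\<^sub>\<infinity>k\<in>{k. fst k + snd k \<ge> N + 1}. Lterm l1 l2 F k z) \<le> m * g N z" by linarith
    then have "(\<Sum>\<^sub>\<infinity>k\<in>{k. fst k + snd k \<ge> N + 1}. Lterm l1 l2 F k z) \<le> (m / c) * g N z"
      using c by (simp add: field_simps)
    also have "\<dots> \<le> C * g N z" using g_nonneg[OF z] by (intro mult_right_mono) (auto simp: C_def)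
    finally show ?thesis using a1 by linarith
  qed
  obtain K where K: "K \<ge> 0" and B: "\<And>z k. z \<in> bidisc \<Longrightarrow> Lterm l1 l2 F k z \<le> K * g N z / \<beta> ^ (fst k + snd k)"
  proof -
    have "\<exists>K \<ge> 0. \<forall>z\<in>bidisc. \<forall>k. Lterm l1 l2 F k z \<le> K * g N z / \<beta> ^ (fst k + snd k)"
      by (rule main[OF C W])
    then show ?thesis using that by blast
  qed
  have x: "0 \<le> 1/\<beta>" "1/\<beta> < 1" using beta by auto
  have "(\<lambda>n. (1/\<beta>)^n) \<longlonglongrightarrow> 0" using x by (intro LIMSEQ_power_zero) auto
  then have "eventually (\<lambda>n. (1/\<beta>)^n < 1 / (K + 1)) sequentially"
    using K by (intro order_tendstoD(2)) auto
  then obtain n1 where n1: "(1/\<beta>)^n1 < 1 / (K + 1)" by (auto simp: eventually_sequentially)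
  have Kn1: "K * (1/\<beta>)^n1 \<le> 1"
  proof -
    have "K * (1/\<beta>)^n1 \<le> K * (1 / (K + 1))" using n1 K by (intro mult_left_mono) auto
    also have "\<dots> \<le> 1" using K by (simp add: field_simps)
    finally show ?thesis .
  qed
  define n0 where "n0 = max N n1"
  show ?thesis unfolding bounded_L_index_joint_def
  proof (intro exI[of _ n0] ballI allI)
    fix z p1 p2 assume z: "z \<in> bidisc"
    have "Lterm l1 l2 F (p1, p2) z \<le> g n0 z"
    proof (cases "p1 + p2 \<le> n0")
      case True then show ?thesis using g_ge[of "(p1,p2)"] by simp
    next
      case False
      have "Lterm l1 l2 F (p1, p2) z \<le> K * g N z / \<beta> ^ (p1 + p2)" using B[OF z, of "(p1,p2)"] by simp
      also have "\<dots> = g N z * (K * (1/\<beta>) ^ (p1 + p2))" by (simp add: power_one_over)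
      also have "\<dots> \<le> g N z * (K * (1/\<beta>) ^ n1)"
        using False x K g_nonneg[OF z] by (intro mult_left_mono power_decreasing) (auto simp: n0_def)
      also have "\<dots> \<le> g N z * 1" using Kn1 g_nonneg[OF z] by (intro mult_left_mono) auto
      also have "\<dots> \<le> g n0 z" by (simp add: g_mono n0_def)
      finally show ?thesis .
    qed
    then show "Lterm l1 l2 F (p1, p2) z \<le> Max ((\<lambda>k. Lterm l1 l2 F k z) ` {k. fst k + snd k \<le> n0})"
      by (simp add: g_def)
  qed
qed

end

theorem theorem7:
  fixes \<beta> :: real and l1 l2 :: "complex \<times> complex \<Rightarrow> real"
    and F :: "complex \<times> complex \<Rightarrow> complex"
  assumes "\<beta> > 1"
    and "continuous_on bidisc l1" and "continuous_on bidisc l2"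
    and "\<forall>z\<in>bidisc. l1 z > \<beta> / (1 - cmod (fst z))"
    and "\<forall>z\<in>bidisc. l2 z > \<beta> / (1 - cmod (snd z))"
    and "Q2 \<beta> l1 l2"
    and "analytic_bidisc F"
  shows "bounded_L_index_joint l1 l2 F \<longleftrightarrow>
    (\<exists>c>0. \<exists>N::nat. \<forall>z\<in>bidisc.
       (\<lambda>k. Lterm l1 l2 F k z) summable_on {k. fst k + snd k \<ge> N + 1} \<and>
       (\<Sum>k\<in>{k. fst k + snd k \<le> N}. Lterm l1 l2 F k z)
         \<ge> c * (\<Sum>\<^sub>\<infinity>k\<in>{k. fst k + snd k \<ge> N + 1}. Lterm l1 l2 F k z))"
proof -
  interpret LQ \<beta> l1 l2 F
    using assms by unfold_locales auto
  show ?thesis using forward backward by blast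
qed


end
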